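(* Let $k\ge 2$, and let $p,q$ be real polynomials with $\deg p=k$, $\deg q=k-1$, whose roots are real, simple and strictly interlacing, with roots of $p$ denoted $p_1<\dots<p_k$. Let $r>0$ and $\varphi\in(-\pi,\pi]$. Then each open disk $D_j$ ($j=1,\dots,k-1$), as well as the region $\{z\in\mathbb{C}:|z-\frac{p_1+p_k}{2}|>\frac{p_k-p_1}{2}\}$, contains at most one solution $z$ of the equation $\frac{q(z)}{p(z)}=re^{i\varphi}$.
   Context: $D_j$ denotes the open disk having the segment $[p_j,p_{j+1}]$ as a diameter (center $\frac{p_j+p_{j+1}}2$, radius $\frac{p_{j+1}-p_j}2$). *)

theory Defs
  imports "HOL-Analysis.Analysis" "HOL-Computational_Algebra.Polynomial"
begin

definition diam_disk :: "real \<Rightarrow> real \<Rightarrow> complex set" where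
  "diam_disk a b = ball (complex_of_real ((a + b) / 2)) ((b - a) / 2)"

end

theory Submission
  imports Defs
begin


lemma poly_factor:
  fixes R :: "complex poly" and t :: "nat \<Rightarrow> complex"
  assumes inj: "inj_on t {1..n}" and z: "\<And>i. i\<in>{1..n} \<Longrightarrow> poly R (t i) = 0"
    and deg: "degree R = n"
  shows "poly R x = lead_coeff R * (\<Prod>i\<in>{1..n}. (x - t i))"
proof -
  define L where "L = smult (lead_coeff R) (\<Prod>i\<in>{1..n}. [:-t i, 1:])"
  have dL: "degree (\<Prod>i\<in>{1..n}. [:-t i, 1:]) = n"
    by (subst degree_prod_eq_sum_degree) auto
  have lL: "lead_coeff (\<Prod>i\<in>{1..n}. [:-t i, 1:]) = 1"
    by (simp add: lead_coeff_prod)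
  have "R = L"
  proof (rule poly_eqI_degree_lead_coeff[where n=n and A="t ` {1..n}"])
    show "poly.coeff R n = poly.coeff L n" using dL lL deg by (simp add: L_def)
    show "n \<le> card (t ` {1..n})" using inj by (simp add: card_image)
    show "degree R \<le> n" using deg by simp
    show "degree L \<le> n" using dL by (simp add: L_def)
    fix y assume "y \<in> t ` {1..n}"
    then obtain i where i: "i \<in> {1..n}" "y = t i" by auto
    have "poly L y = 0" unfolding L_def poly_smult poly_prod
      using i by (auto intro!: bexI[of _ i])
    then show "poly R y = poly L y" using z i by simp
  qed
  moreover have "poly L x = lead_coeff R * (\<Prod>i\<in>{1..n}. (x - t i))"
    by (simp add: L_def poly_prod)
  ultimately show ?thesis by simp
qed

lemma lagrange:
  fixes R :: "complex poly" and t :: "nat \<Rightarrow> complex"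
  assumes inj: "inj_on t {1..n}" and deg: "degree R < n"
  shows "poly R x = (\<Sum>i\<in>{1..n}. poly R (t i) * (\<Prod>l\<in>{1..n}-{i}. (x - t l) / (t i - t l)))"
proof -
  define L where "L = (\<Sum>i\<in>{1..n}. smult (poly R (t i) / (\<Prod>l\<in>{1..n}-{i}. (t i - t l))) (\<Prod>l\<in>{1..n}-{i}. [:-t l, 1:]))"
  have dL: "degree L \<le> n - 1"
    unfolding L_def
  proof (rule degree_sum_le)
    fix i assume i: "i \<in> {1..n}"
    have "degree (\<Prod>l\<in>{1..n}-{i}. [:-t l, 1:]) = n - 1"
      using i by (subst degree_prod_eq_sum_degree) auto
    then show "degree (smult (poly R (t i) / (\<Prod>l\<in>{1..n}-{i}. (t i - t l))) (\<Prod>l\<in>{1..n}-{i}. [:-t l, 1:])) \<le> n - 1"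
      by (metis degree_smult_le order_trans)
  qed auto
  have "R = L"
  proof (rule poly_eqI_degree[where A="t ` {1..n}"])
    show "degree R < card (t ` {1..n})" using inj deg by (simp add: card_image)
    show "degree L < card (t ` {1..n})" using inj deg dL by (simp add: card_image)
    fix y assume "y \<in> t ` {1..n}"
    then obtain j where j: "j \<in> {1..n}" "y = t j" by auto
    have "t j - t l \<noteq> 0" if "l \<in> {1..n}-{j}" for l
      using inj j that inj_onD by fastforce
    then have nz: "(\<Prod>l\<in>{1..n}-{j}. (t j - t l)) \<noteq> 0"
      by (simp add: prod_zero_iff)
    have "poly L y = (\<Sum>i\<in>{1..n}. poly R (t i) / (\<Prod>l\<in>{1..n}-{i}. (t i - t l)) * (\<Prod>l\<in>{1..n}-{i}. (t j - t l)))"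
      unfolding L_def poly_sum poly_smult poly_prod j by simp
    also have "\<dots> = poly R (t j) / (\<Prod>l\<in>{1..n}-{j}. (t j - t l)) * (\<Prod>l\<in>{1..n}-{j}. (t j - t l))"
    proof -
      define f where "f i = poly R (t i) / (\<Prod>l\<in>{1..n}-{i}. (t i - t l)) * (\<Prod>l\<in>{1..n}-{i}. (t j - t l))" for i
      have "sum f {1..n} = f j + sum f ({1..n}-{j})" using j by (simp add: sum.remove)
      moreover have "sum f ({1..n}-{j}) = 0"
      proof (rule sum.neutral, intro ballI)
        fix i assume "i \<in> {1..n}-{j}"
        then have "(\<Prod>l\<in>{1..n}-{i}. (t j - t l)) = 0" using j by (auto intro!: bexI[of _ j])
        then show "f i = 0" by (simp add: f_def)
      qed
      ultimately show ?thesis by (simp add: f_def)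
    qed
    also have "\<dots> = poly R y" using nz j by simp
    finally show "poly R y = poly L y" by simp
  qed
  then have "poly R x = poly L x" by simp
  also have "\<dots> = (\<Sum>i\<in>{1..n}. poly R (t i) * (\<Prod>l\<in>{1..n}-{i}. (x - t l) / (t i - t l)))"
    unfolding L_def poly_sum poly_smult poly_prod
    by (intro sum.cong refl) (simp add: prod_dividef)
  finally show ?thesis .
qed



lemma N_pos: "z \<noteq> complex_of_real t \<Longrightarrow> (Re z - t)^2 + Im z^2 > 0"
proof (rule ccontr)
  assume a: "z \<noteq> complex_of_real t" "\<not> (Re z - t)^2 + Im z^2 > 0"
  then have "Re z - t = 0" "Im z = 0"
    by (smt (verit) power2_less_eq_zero_iff zero_le_power2)+
  then have "z = complex_of_real t" by (simp add: complex_eq_iff)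
  with a show False by simp
qed

lemma aux_frac:
  fixes a b ca cb X Y d :: complex
  assumes "a \<noteq> 0" "b \<noteq> 0" "ca \<noteq> 0" "cb \<noteq> 0"
  shows "X*Y*(d/(a*b)) = d/((a*ca)*(b*cb)) * ((X*ca)*(Y*cb))"
  using assms by (simp add: field_simps)

lemma key:
  fixes I :: "nat set" and D t :: "nat \<Rightarrow> real" and z w :: complex and e \<sigma> :: real
  assumes fin: "finite I" and Dpos: "\<And>i. i\<in>I \<Longrightarrow> D i > 0" and zw: "z \<noteq> w"
   and zt: "\<And>i. i\<in>I \<Longrightarrow> z \<noteq> of_real (t i)" and wt: "\<And>i. i\<in>I \<Longrightarrow> w \<noteq> of_real (t i)"
   and eq: "(\<Sum>i\<in>I. of_real (D i)/(z - of_real (t i))) = (\<Sum>i\<in>I. of_real(D i)/(w - of_real(t i)))"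
   and PP: "\<And>i. i\<in>I \<Longrightarrow> ((Re z - e)*(Re z - t i) + Im z^2) * ((Re w - e)*(Re w - t i) + Im w^2) > 0"
   and sz: "\<And>i. i\<in>I \<Longrightarrow> \<sigma>*(e - t i)*((Re z - e)*(Re z - t i) + Im z^2) \<ge> 0"
   and sw: "\<And>i. i\<in>I \<Longrightarrow> \<sigma>*(e - t i)*((Re w - e)*(Re w - t i) + Im w^2) \<ge> 0"
   and ii: "ii \<in> I" and s0: "\<sigma>*(e - t ii)*((Re z - e)*(Re z - t ii) + Im z^2) > 0"
  shows False
proof -
  define S where "S = (\<Sum>i\<in>I. of_real (D i)/((z - of_real (t i))*(w - of_real (t i))))"
  have "(\<Sum>i\<in>I. of_real (D i)/(z - of_real (t i))) - (\<Sum>i\<in>I. of_real(D i)/(w - of_real(t i)))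
        = (w - z) * S"
    unfolding S_def sum_subtractf[symmetric] sum_distrib_left
  proof (rule sum.cong[OF refl])
    fix i assume i: "i \<in> I"
    have "z - of_real (t i) \<noteq> 0" "w - of_real (t i) \<noteq> 0" using zt[OF i] wt[OF i] by auto
    then show "of_real (D i)/(z - of_real (t i)) - of_real(D i)/(w - of_real(t i)) =
      (w - z) * (of_real (D i)/((z - of_real (t i))*(w - of_real (t i))))"
      by (simp add: field_simps)
  qed
  with eq zw have S0: "S = 0" by simp
  define Nz where "Nz i = (Re z - t i)^2 + Im z^2" for i
  define Nw where "Nw i = (Re w - t i)^2 + Im w^2" for i
  have Nzp: "Nz i > 0" if "i \<in> I" for i using N_pos[OF zt[OF that]] by (simp add: Nz_def)
  have Nwp: "Nw i > 0" if "i \<in> I" for i using N_pos[OF wt[OF that]] by (simp add: Nw_def)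
  define Kz where "Kz = (\<Sum>i\<in>I. D i / Nz i)"
  define Kw where "Kw = (\<Sum>i\<in>I. D i / Nw i)"
  have Kzp: "Kz > 0" unfolding Kz_def
    by (rule sum_pos) (use fin ii Dpos Nzp in auto)
  have Kwp: "Kw > 0" unfolding Kw_def
    by (rule sum_pos) (use fin ii Dpos Nwp in auto)
  have "Im (\<Sum>i\<in>I. of_real (D i)/(z - of_real (t i))) = - Im z * Kz"
    unfolding Kz_def Im_sum sum_distrib_left
    by (rule sum.cong[OF refl]) (simp add: Im_divide Nz_def)
  moreover have "Im (\<Sum>i\<in>I. of_real (D i)/(w - of_real (t i))) = - Im w * Kw"
    unfolding Kw_def Im_sum sum_distrib_left
    by (rule sum.cong[OF refl]) (simp add: Im_divide Nw_def)
  ultimately have yK: "Im z * Kz = Im w * Kw" using eq by simp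
  define Yz where "Yz i = (z - of_real e) * cnj (z - of_real (t i))" for i
  define Yw where "Yw i = (w - of_real e) * cnj (w - of_real (t i))" for i
  define h where "h i = of_real (D i / (Nz i * Nw i)) * (Yz i * Yw i)" for i
  have hsum: "(z - of_real e) * (w - of_real e) * S = (\<Sum>i\<in>I. h i)"
    unfolding S_def sum_distrib_left
  proof (rule sum.cong[OF refl])
    fix i assume i: "i \<in> I"
    have a: "z - of_real (t i) \<noteq> 0" "w - of_real (t i) \<noteq> 0" using zt[OF i] wt[OF i] by auto
    have c1: "complex_of_real (Nz i) = (z - of_real (t i)) * cnj (z - of_real (t i))"
      by (subst complex_mult_cnj) (simp add: Nz_def)
    have c2: "complex_of_real (Nw i) = (w - of_real (t i)) * cnj (w - of_real (t i))"
      by (subst complex_mult_cnj) (simp add: Nw_def)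
    have b: "cnj (z - of_real (t i)) \<noteq> 0" "cnj (w - of_real (t i)) \<noteq> 0" using a complex_cnj_zero_iff by blast+
    show "(z - of_real e) * (w - of_real e) * (of_real (D i)/((z - of_real (t i))*(w - of_real (t i)))) = h i"
      unfolding h_def of_real_divide of_real_mult c1 c2 Yz_def Yw_def
      by (rule aux_frac[OF a b])
  qed
  have ReY: "Re (Yz i) = (Re z - e)*(Re z - t i) + Im z^2" "Im (Yz i) = Im z * (e - t i)"
       "Re (Yw i) = (Re w - e)*(Re w - t i) + Im w^2" "Im (Yw i) = Im w * (e - t i)" for i
    by (simp_all add: Yz_def Yw_def algebra_simps power2_eq_square)
  have sum0: "(\<Sum>i\<in>I. h i) = 0" using hsum S0 by simp
  show False
  proof (cases "Im z = 0")
    case True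
    then have "Im w = 0" using yK Kwp by simp
    have "Re (h i) > 0" if i: "i \<in> I" for i
    proof -
      have "Re (h i) = D i / (Nz i * Nw i) * (((Re z - e)*(Re z - t i) + Im z^2) * ((Re w - e)*(Re w - t i) + Im w^2))"
        using True \<open>Im w = 0\<close> by (simp add: h_def ReY)
      also have "\<dots> > 0" using PP[OF i] Dpos[OF i] Nzp[OF i] Nwp[OF i] by simp
      finally show ?thesis .
    qed
    then have "Re (\<Sum>i\<in>I. h i) > 0" unfolding Re_sum
      by (intro sum_pos) (use fin ii in auto)
    with sum0 show False by simp
  next
    case False
    have yy: "Im z * Im w > 0"
    proof -
      have "Im z * Im z * Kz = Im z * Im w * Kw" using yK by (metis mult.assoc)
      moreover have "Im z * Im z * Kz > 0" using False Kzp by (metis mult_pos_pos not_real_square_gt_zero)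
      ultimately have "Im z * Im w * Kw > 0" by linarith
      then show ?thesis using Kwp by (simp add: zero_less_mult_iff)
    qed
    define g where "g i = \<sigma> * Im z * Im (h i)" for i
    have g_eq: "g i = D i / (Nz i * Nw i) * (Im z * Im w * (\<sigma>*(e - t i)*((Re z - e)*(Re z - t i) + Im z^2))
       + Im z * Im z * (\<sigma>*(e - t i)*((Re w - e)*(Re w - t i) + Im w^2)))" for i
    proof -
      have "Im (h i) = D i / (Nz i * Nw i) * (Re (Yz i) * Im (Yw i) + Im (Yz i) * Re (Yw i))"
        by (simp add: h_def)
      then have "g i = D i / (Nz i * Nw i) * (\<sigma> * Im z * (Re (Yz i) * Im (Yw i) + Im (Yz i) * Re (Yw i)))"
        by (simp add: g_def)
      also have "\<dots> = D i / (Nz i * Nw i) * (Im z * Im w * (\<sigma>*(e - t i)*((Re z - e)*(Re z - t i) + Im z^2))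
       + Im z * Im z * (\<sigma>*(e - t i)*((Re w - e)*(Re w - t i) + Im w^2)))"
        unfolding ReY by (intro arg_cong[where f="\<lambda>x. D i / (Nz i * Nw i) * x"]) (simp add: algebra_simps)
      finally show ?thesis .
    qed
    have gnn: "g i \<ge> 0" if i: "i \<in> I" for i
    proof -
      have "0 \<le> D i / (Nz i * Nw i)" using Dpos[OF i] Nzp[OF i] Nwp[OF i] by simp
      moreover have "0 \<le> Im z * Im w * (\<sigma>*(e - t i)*((Re z - e)*(Re z - t i) + Im z^2))"
        using yy sz[OF i] by simp
      moreover have "0 \<le> Im z * Im z * (\<sigma>*(e - t i)*((Re w - e)*(Re w - t i) + Im w^2))"
        using sw[OF i] by simp
      ultimately show ?thesis unfolding g_eq by (rule mult_nonneg_nonneg[OF _ add_nonneg_nonneg])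
    qed
    have gp: "g ii > 0"
    proof -
      have "0 < D ii / (Nz ii * Nw ii)" using Dpos[OF ii] Nzp[OF ii] Nwp[OF ii] by simp
      moreover have "0 < Im z * Im w * (\<sigma>*(e - t ii)*((Re z - e)*(Re z - t ii) + Im z^2))"
        using yy s0 by simp
      moreover have "0 \<le> Im z * Im z * (\<sigma>*(e - t ii)*((Re w - e)*(Re w - t ii) + Im w^2))"
        using sw[OF ii] by simp
      ultimately show ?thesis unfolding g_eq by (rule mult_pos_pos[OF _ add_pos_nonneg])
    qed
    have "sum g I > 0" using sum_pos2[of I ii g] fin ii gp gnn by blast
    moreover have "sum g I = \<sigma> * Im z * Im (\<Sum>i\<in>I. h i)"
      by (simp add: g_def sum_distrib_left)
    ultimately show False using sum0 by simp
  qed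
qed



lemma disk_ineq:
  assumes "z \<in> diam_disk a b"
  shows "(Re z - a)*(Re z - b) + Im z^2 < 0"
proof -
  have "cmod (complex_of_real ((a+b)/2) - z) < (b-a)/2"
    using assms by (simp add: diam_disk_def dist_norm)
  then have "(cmod (complex_of_real ((a+b)/2) - z))^2 < ((b-a)/2)^2"
    by (intro power_strict_mono) auto
  then have "((a+b)/2 - Re z)^2 + Im z^2 < ((b-a)/2)^2"
    by (simp add: cmod_power2)
  moreover have "((a+b)/2 - Re z)^2 - ((b-a)/2)^2 = (Re z - a)*(Re z - b)"
    by (simp add: power2_eq_square field_simps)
  ultimately show ?thesis by linarith
qed

lemma ext_ineq:
  assumes "cmod (z - complex_of_real ((a+b)/2)) > (b-a)/2" "a \<le> b"
  shows "(Re z - a)*(Re z - b) + Im z^2 > 0"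
proof -
  have "((b-a)/2)^2 < (cmod (z - complex_of_real ((a+b)/2)))^2"
    using assms by (intro power_strict_mono) auto
  then have "((b-a)/2)^2 < (Re z - (a+b)/2)^2 + Im z^2"
    by (simp add: cmod_power2)
  moreover have "(Re z - (a+b)/2)^2 - ((b-a)/2)^2 = (Re z - a)*(Re z - b)"
    by (simp add: power2_eq_square field_simps)
  ultimately show ?thesis by linarith
qed

lemma disk_P1:
  fixes x y a b t :: real
  assumes "(x-a)*(x-b)+y^2 < 0" "a < b" "t \<le> a"
  shows "(x-a)*(x-t)+y^2 > 0"
proof -
  have "(x-a)*(x-b) < 0" using assms(1) by (smt (verit) zero_le_power2)
  then have "x > a" using assms(2) by (smt (verit) mult_nonneg_nonneg mult_nonpos_nonpos)
  then have "(x-a)*(x-t) > 0" using assms(3) by simp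
  then show ?thesis by (smt (verit) zero_le_power2)
qed

lemma disk_P2:
  fixes x y a b t :: real
  assumes "(x-a)*(x-b)+y^2 < 0" "a < b" "b \<le> t"
  shows "(x-a)*(x-t)+y^2 < 0"
proof -
  have "(x-a)*(x-b) < 0" using assms(1) by (smt (verit) zero_le_power2)
  then have "x > a" using assms(2) by (smt (verit) mult_nonneg_nonneg mult_nonpos_nonpos)
  then have "(x-a)*(x-t) \<le> (x-a)*(x-b)" using assms(3) by (intro mult_left_mono) auto
  then show ?thesis using assms(1) by linarith
qed

lemma ext_P:
  fixes x y a b t :: real
  assumes "(x-a)*(x-b)+y^2 > 0" "a \<le> t" "t \<le> b"
  shows "(x-a)*(x-t)+y^2 > 0"
proof (cases "x \<ge> a")
  case True
  then have "(x-a)*(x-t) \<ge> (x-a)*(x-b)" using assms(3) by (intro mult_left_mono) auto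
  then show ?thesis using assms(1) by linarith
next
  case False
  then have "(x-a)*(x-t) > 0" using assms(2) by (intro mult_neg_neg) auto
  then show ?thesis by (smt (verit) zero_le_power2)
qed

lemma D_pos:
  fixes pr qr :: "nat \<Rightarrow> real" and k i :: nat
  assumes pr_mono: "\<And>i j. 1 \<le> i \<Longrightarrow> i < j \<Longrightarrow> j \<le> k \<Longrightarrow> pr i < pr j"
    and interlace: "\<And>j. 1 \<le> j \<Longrightarrow> j \<le> k - 1 \<Longrightarrow> pr j < qr j \<and> qr j < pr (j + 1)"
    and i: "i \<in> {1..k}"
  shows "(\<Prod>m\<in>{1..k-1}. (pr i - qr m)) / (\<Prod>l\<in>{1..k}-{i}. (pr i - pr l)) > 0"
proof -
  define s where "s m = (if m < i then m else Suc m)" for m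
  have inj: "inj_on s {1..k-1}" unfolding inj_on_def s_def by auto
  have img: "s ` {1..k-1} = {1..k}-{i}"
  proof
    show "s ` {1..k-1} \<subseteq> {1..k}-{i}" using i by (auto simp: s_def)
    show "{1..k}-{i} \<subseteq> s ` {1..k-1}"
    proof
      fix l assume l: "l \<in> {1..k}-{i}"
      show "l \<in> s ` {1..k-1}"
      proof (cases "l < i")
        case True
        then show ?thesis using l i by (intro image_eqI[of _ _ l]) (auto simp: s_def)
      next
        case False
        then show ?thesis using l i by (intro image_eqI[of _ _ "l - 1"]) (auto simp: s_def)
      qed
    qed
  qed
  have "(\<Prod>l\<in>{1..k}-{i}. (pr i - pr l)) = (\<Prod>m\<in>{1..k-1}. (pr i - pr (s m)))"
    using prod.reindex[OF inj, of "\<lambda>l. pr i - pr l"] img by simp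
  then have "(\<Prod>m\<in>{1..k-1}. (pr i - qr m)) / (\<Prod>l\<in>{1..k}-{i}. (pr i - pr l))
       = (\<Prod>m\<in>{1..k-1}. (pr i - qr m) / (pr i - pr (s m)))"
    by (simp add: prod_dividef)
  also have "\<dots> > 0"
  proof (rule prod_pos)
    fix m assume m: "m \<in> {1..k-1}"
    have il: "pr m < qr m" "qr m < pr (m+1)" using interlace[of m] m by auto
    show "(pr i - qr m) / (pr i - pr (s m)) > 0"
    proof (cases "m < i")
      case True
      have "pr (m+1) \<le> pr i"
        using True i m pr_mono[of "m+1" i] by (cases "m+1 = i") auto
      then show ?thesis using True il by (simp add: s_def)
    next
      case False
      have "pr i \<le> pr m" using False i m pr_mono[of i m] by (cases "m = i") (auto simp: less_imp_le)
      moreover have "pr i < pr (m+1)" using False i m pr_mono[of i "m+1"] by auto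
      ultimately show ?thesis using False il by (simp add: s_def divide_neg_neg)
    qed
  qed
  finally show ?thesis .
qed


lemma aux_frac2:
  fixes a b l L X Pi :: complex
  assumes "b \<noteq> 0" "L \<noteq> 0" "X \<noteq> 0" "Pi \<noteq> 0"
  shows "l * a * (Pi / b) / (L * (X * Pi)) = (l / L) * (a / b) / X"
  using assms by (simp add: field_simps)

theorem corollary1:
  fixes p q :: "real poly" and k :: nat and pr qr :: "nat \<Rightarrow> real"
    and r \<phi> :: real
  assumes k: "k \<ge> 2"
    and degp: "degree p = k" and degq: "degree q = k - 1"
    and pr_mono: "\<And>i j. 1 \<le> i \<Longrightarrow> i < j \<Longrightarrow> j \<le> k \<Longrightarrow> pr i < pr j"
    and qr_mono: "\<And>i j. 1 \<le> i \<Longrightarrow> i < j \<Longrightarrow> j \<le> k - 1 \<Longrightarrow> qr i < qr j"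
    and p_roots: "{z::complex. poly (map_poly complex_of_real p) z = 0} = complex_of_real ` pr ` {1..k}"
    and q_roots: "{z::complex. poly (map_poly complex_of_real q) z = 0} = complex_of_real ` qr ` {1..k-1}"
    and p_simple: "\<And>j. j \<in> {1..k} \<Longrightarrow> order (pr j) p = 1"
    and q_simple: "\<And>j. j \<in> {1..k-1} \<Longrightarrow> order (qr j) q = 1"
    and interlace: "\<And>j. 1 \<le> j \<Longrightarrow> j \<le> k - 1 \<Longrightarrow> pr j < qr j \<and> qr j < pr (j + 1)"
    and r: "r > 0"
    and phi: "-pi < \<phi>" "\<phi> \<le> pi"
  shows "(\<forall>j \<in> {1..k-1}. \<forall>z \<in> diam_disk (pr j) (pr (j + 1)). \<forall>w \<in> diam_disk (pr j) (pr (j + 1)).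
            poly (map_poly complex_of_real q) z / poly (map_poly complex_of_real p) z = r * cis \<phi> \<and>
            poly (map_poly complex_of_real q) w / poly (map_poly complex_of_real p) w = r * cis \<phi>
            \<longrightarrow> z = w)
       \<and> (\<forall>z w. cmod (z - complex_of_real ((pr 1 + pr k) / 2)) > (pr k - pr 1) / 2 \<and>
                 cmod (w - complex_of_real ((pr 1 + pr k) / 2)) > (pr k - pr 1) / 2 \<and>
            poly (map_poly complex_of_real q) z / poly (map_poly complex_of_real p) z = r * cis \<phi> \<and>
            poly (map_poly complex_of_real q) w / poly (map_poly complex_of_real p) w = r * cis \<phi>
            \<longrightarrow> z = w)"
proof -
  define P where "P = map_poly complex_of_real p"
  define Q where "Q = map_poly complex_of_real q"
  define cp where "cp i = complex_of_real (pr i)" for i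
  define cq where "cq i = complex_of_real (qr i)" for i
  define lp where "lp = lead_coeff p"
  define lq where "lq = lead_coeff q"
  have degP: "degree P = k" using degp by (simp add: P_def degree_map_poly)
  have degQ: "degree Q = k - 1" using degq by (simp add: Q_def degree_map_poly)
  have lP: "lead_coeff P = complex_of_real lp"
    using degp by (simp add: P_def degree_map_poly coeff_map_poly lp_def)
  have lQ: "lead_coeff Q = complex_of_real lq"
    using degq by (simp add: Q_def degree_map_poly coeff_map_poly lq_def)
  have "p \<noteq> 0" using degp k by auto
  then have lp0: "lp \<noteq> 0" by (simp add: lp_def)
  have "q \<noteq> 0" using degq k by auto
  then have lq0: "lq \<noteq> 0" by (simp add: lq_def)
  have injp: "inj_on cp {1..k}"
  proof (rule inj_onI)
    fix i j assume ij: "i \<in> {1..k}" "j \<in> {1..k}" "cp i = cp j"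
    then have "pr i = pr j" by (simp add: cp_def)
    then show "i = j" using ij pr_mono[of i j] pr_mono[of j i]
      by (cases i j rule: linorder_cases) auto
  qed
  have injq: "inj_on cq {1..k-1}"
  proof (rule inj_onI)
    fix i j assume ij: "i \<in> {1..k-1}" "j \<in> {1..k-1}" "cq i = cq j"
    then have "qr i = qr j" by (simp add: cq_def)
    then show "i = j" using ij qr_mono[of i j] qr_mono[of j i]
      by (cases i j rule: linorder_cases) auto
  qed
  have Pz: "poly P (cp i) = 0" if "i \<in> {1..k}" for i
    using p_roots that by (auto simp: P_def cp_def)
  have Qz: "poly Q (cq i) = 0" if "i \<in> {1..k-1}" for i
    using q_roots that by (auto simp: Q_def cq_def)
  have Pf: "poly P x = complex_of_real lp * (\<Prod>i\<in>{1..k}. (x - cp i))" for x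
    using poly_factor[OF injp Pz degP] lP by simp
  have Qf: "poly Q x = complex_of_real lq * (\<Prod>i\<in>{1..k-1}. (x - cq i))" for x
    using poly_factor[OF injq Qz degQ] lQ by simp
  have Ql: "poly Q x = (\<Sum>i\<in>{1..k}. poly Q (cp i) * (\<Prod>l\<in>{1..k}-{i}. (x - cp l) / (cp i - cp l)))" for x
    by (rule lagrange[OF injp]) (use degQ k in simp)
  define D where "D i = (\<Prod>m\<in>{1..k-1}. (pr i - qr m)) / (\<Prod>l\<in>{1..k}-{i}. (pr i - pr l))" for i
  have Dpos: "D i > 0" if "i \<in> {1..k}" for i
    unfolding D_def by (rule D_pos[of k pr qr, OF pr_mono interlace that])
  define G where "G x = (\<Sum>i\<in>{1..k}. complex_of_real (D i) / (x - complex_of_real (pr i)))" for x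
  have FG: "poly Q x / poly P x = complex_of_real (lq / lp) * G x" if Px: "poly P x \<noteq> 0" for x
  proof -
    have "poly Q x / poly P x = (\<Sum>i\<in>{1..k}. poly Q (cp i) * (\<Prod>l\<in>{1..k}-{i}. (x - cp l) / (cp i - cp l)) / poly P x)"
      by (subst Ql) (simp add: sum_divide_distrib)
    also have "\<dots> = (\<Sum>i\<in>{1..k}. complex_of_real (lq / lp) * (complex_of_real (D i) / (x - complex_of_real (pr i))))"
    proof (rule sum.cong[OF refl])
      fix i assume i: "i \<in> {1..k}"
      have Pr: "poly P x = complex_of_real lp * ((x - cp i) * (\<Prod>l\<in>{1..k}-{i}. (x - cp l)))"
        unfolding Pf using i by (simp add: prod.remove)
      have nz1: "x - cp i \<noteq> 0" "(\<Prod>l\<in>{1..k}-{i}. (x - cp l)) \<noteq> 0"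
        using Px unfolding Pr by auto
      have "cp i - cp l \<noteq> 0" if "l \<in> {1..k}-{i}" for l
        using injp i that inj_onD by fastforce
      then have nz2: "(\<Prod>l\<in>{1..k}-{i}. (cp i - cp l)) \<noteq> 0" by (simp add: prod_zero_iff)
      have Qi: "poly Q (cp i) = complex_of_real lq * (\<Prod>m\<in>{1..k-1}. (cp i - cq m))" by (rule Qf)
      have e1: "(\<Prod>m\<in>{1..k-1}. (cp i - cq m)) = complex_of_real (\<Prod>m\<in>{1..k-1}. (pr i - qr m))"
        by (simp add: cp_def cq_def)
      have e2: "(\<Prod>l\<in>{1..k}-{i}. (cp i - cp l)) = complex_of_real (\<Prod>l\<in>{1..k}-{i}. (pr i - pr l))"
        by (simp add: cp_def)
      have lp0': "complex_of_real lp \<noteq> 0" using lp0 by simp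
      have "poly Q (cp i) * (\<Prod>l\<in>{1..k}-{i}. (x - cp l) / (cp i - cp l)) / poly P x
         = complex_of_real lq * (\<Prod>m\<in>{1..k-1}. (cp i - cq m)) * ((\<Prod>l\<in>{1..k}-{i}. (x - cp l)) / (\<Prod>l\<in>{1..k}-{i}. (cp i - cp l)))
           / (complex_of_real lp * ((x - cp i) * (\<Prod>l\<in>{1..k}-{i}. (x - cp l))))"
        unfolding Qi Pr by (simp add: prod_dividef)
      also have "\<dots> = (complex_of_real lq / complex_of_real lp) * ((\<Prod>m\<in>{1..k-1}. (cp i - cq m)) / (\<Prod>l\<in>{1..k}-{i}. (cp i - cp l))) / (x - cp i)"
        by (rule aux_frac2[OF nz2 lp0' nz1])
      also have "\<dots> = complex_of_real (lq / lp) * (complex_of_real (D i) / (x - complex_of_real (pr i)))"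
        unfolding e1 e2 D_def by (simp add: cp_def)
      finally show "poly Q (cp i) * (\<Prod>l\<in>{1..k}-{i}. (x - cp l) / (cp i - cp l)) / poly P x
          = complex_of_real (lq / lp) * (complex_of_real (D i) / (x - complex_of_real (pr i)))" .
    qed
    also have "\<dots> = complex_of_real (lq / lp) * G x" by (simp add: G_def sum_distrib_left)
    finally show ?thesis .
  qed
  have rc: "complex_of_real r * cis \<phi> \<noteq> 0" using r by simp
  have sol: "poly P x \<noteq> 0 \<and> (\<forall>i\<in>{1..k}. x \<noteq> complex_of_real (pr i))"
    if "poly Q x / poly P x = complex_of_real r * cis \<phi>" for x
  proof -
    have "poly P x \<noteq> 0" using that rc by auto
    moreover have "x \<noteq> complex_of_real (pr i)" if "i \<in> {1..k}" "poly P x \<noteq> 0" for i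
      using Pz[OF that(1)] that(2) by (auto simp: cp_def)
    ultimately show ?thesis by blast
  qed
  have Geq: "G z = G w" if "poly Q z / poly P z = complex_of_real r * cis \<phi>"
      "poly Q w / poly P w = complex_of_real r * cis \<phi>" for z w
  proof -
    have "complex_of_real (lq / lp) * G z = complex_of_real (lq / lp) * G w"
      using FG sol that by metis
    moreover have "complex_of_real (lq / lp) \<noteq> 0" using lp0 lq0 by simp
    ultimately show ?thesis by simp
  qed
  have prle: "pr i \<le> pr j" if "1 \<le> i" "i \<le> j" "j \<le> k" for i j
    using pr_mono[of i j] that by (cases "i = j") (auto simp: less_imp_le)
  show ?thesis
  proof (intro conjI ballI allI impI)
    fix j z w
    assume j: "j \<in> {1..k-1}" and z: "z \<in> diam_disk (pr j) (pr (j + 1))"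
      and w: "w \<in> diam_disk (pr j) (pr (j + 1))"
      and eqs: "poly (map_poly complex_of_real q) z / poly (map_poly complex_of_real p) z = r * cis \<phi> \<and>
            poly (map_poly complex_of_real q) w / poly (map_poly complex_of_real p) w = r * cis \<phi>"
    have ab: "pr j < pr (j+1)" using j pr_mono[of j "j+1"] by auto
    have dz: "(Re z - pr j)*(Re z - pr (j+1)) + Im z^2 < 0" by (rule disk_ineq[OF z])
    have dw: "(Re w - pr j)*(Re w - pr (j+1)) + Im w^2 < 0" by (rule disk_ineq[OF w])
    have ez: "poly Q z / poly P z = complex_of_real r * cis \<phi>" and ew: "poly Q w / poly P w = complex_of_real r * cis \<phi>"
      using eqs by (simp_all add: P_def Q_def)
    have side: "pr i \<le> pr j \<or> pr (j+1) \<le> pr i" if "i \<in> {1..k}" for i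
      using that j prle[of i j] prle[of "j+1" i] by (cases "i \<le> j") auto
    show "z = w"
    proof (rule ccontr)
      assume zw: "z \<noteq> w"
      show False
      proof (rule key[where I="{1..k}" and D=D and t=pr and e="pr j" and \<sigma>=1 and ii="j+1" and z=z and w=w])
        show "finite {1..k}" by simp
        show "\<And>i. i \<in> {1..k} \<Longrightarrow> 0 < D i" by (rule Dpos)
        show "z \<noteq> w" by fact
        show "\<And>i. i \<in> {1..k} \<Longrightarrow> z \<noteq> complex_of_real (pr i)" using sol[OF ez] by blast
        show "\<And>i. i \<in> {1..k} \<Longrightarrow> w \<noteq> complex_of_real (pr i)" using sol[OF ew] by blast
        show "(\<Sum>i\<in>{1..k}. complex_of_real (D i) / (z - complex_of_real (pr i))) =
              (\<Sum>i\<in>{1..k}. complex_of_real (D i) / (w - complex_of_real (pr i)))"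
          using Geq[OF ez ew] by (simp add: G_def)
        show "j + 1 \<in> {1..k}" using j by auto
        show "0 < 1 * (pr j - pr (j + 1)) * ((Re z - pr j) * (Re z - pr (j + 1)) + (Im z)\<^sup>2)"
          using disk_P2[OF dz ab order_refl] ab by (simp add: mult_neg_neg)
        fix i assume i: "i \<in> {1..k}"
        show "0 < ((Re z - pr j) * (Re z - pr i) + (Im z)\<^sup>2) * ((Re w - pr j) * (Re w - pr i) + (Im w)\<^sup>2)"
          using side[OF i] disk_P1[OF dz ab] disk_P1[OF dw ab] disk_P2[OF dz ab] disk_P2[OF dw ab]
          by (auto intro: mult_pos_pos mult_neg_neg)
        show "0 \<le> 1 * (pr j - pr i) * ((Re z - pr j) * (Re z - pr i) + (Im z)\<^sup>2)"
          using side[OF i] disk_P1[OF dz ab, of "pr i"] disk_P2[OF dz ab, of "pr i"] ab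
          by (auto intro: mult_nonneg_nonneg mult_nonpos_nonpos)
        show "0 \<le> 1 * (pr j - pr i) * ((Re w - pr j) * (Re w - pr i) + (Im w)\<^sup>2)"
          using side[OF i] disk_P1[OF dw ab, of "pr i"] disk_P2[OF dw ab, of "pr i"] ab
          by (auto intro: mult_nonneg_nonneg mult_nonpos_nonpos)
      qed
    qed
  next
    fix z w
    assume as: "cmod (z - complex_of_real ((pr 1 + pr k) / 2)) > (pr k - pr 1) / 2 \<and>
                 cmod (w - complex_of_real ((pr 1 + pr k) / 2)) > (pr k - pr 1) / 2 \<and>
            poly (map_poly complex_of_real q) z / poly (map_poly complex_of_real p) z = r * cis \<phi> \<and>
            poly (map_poly complex_of_real q) w / poly (map_poly complex_of_real p) w = r * cis \<phi>"
    have ab: "pr 1 < pr k" using k pr_mono[of 1 k] by auto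
    have dz: "(Re z - pr 1)*(Re z - pr k) + Im z^2 > 0" by (rule ext_ineq) (use as ab in auto)
    have dw: "(Re w - pr 1)*(Re w - pr k) + Im w^2 > 0" by (rule ext_ineq) (use as ab in auto)
    have ez: "poly Q z / poly P z = complex_of_real r * cis \<phi>" and ew: "poly Q w / poly P w = complex_of_real r * cis \<phi>"
      using as by (simp_all add: P_def Q_def)
    have rng: "pr 1 \<le> pr i \<and> pr i \<le> pr k" if "i \<in> {1..k}" for i
      using that prle[of 1 i] prle[of i k] by auto
    show "z = w"
    proof (rule ccontr)
      assume zw: "z \<noteq> w"
      show False
      proof (rule key[where I="{1..k}" and D=D and t=pr and e="pr 1" and \<sigma>="-1" and ii="k" and z=z and w=w])
        show "finite {1..k}" by simp
        show "\<And>i. i \<in> {1..k} \<Longrightarrow> 0 < D i" by (rule Dpos)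
        show "z \<noteq> w" by fact
        show "\<And>i. i \<in> {1..k} \<Longrightarrow> z \<noteq> complex_of_real (pr i)" using sol[OF ez] by blast
        show "\<And>i. i \<in> {1..k} \<Longrightarrow> w \<noteq> complex_of_real (pr i)" using sol[OF ew] by blast
        show "(\<Sum>i\<in>{1..k}. complex_of_real (D i) / (z - complex_of_real (pr i))) =
              (\<Sum>i\<in>{1..k}. complex_of_real (D i) / (w - complex_of_real (pr i)))"
          using Geq[OF ez ew] by (simp add: G_def)
        show "k \<in> {1..k}" using k by auto
        have "(Re z - pr 1) * (Re z - pr k) + (Im z)\<^sup>2 > 0" by (rule dz)
        then show "0 < -1 * (pr 1 - pr k) * ((Re z - pr 1) * (Re z - pr k) + (Im z)\<^sup>2)"
          using ab by simp
        fix i assume i: "i \<in> {1..k}"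
        have pz: "(Re z - pr 1) * (Re z - pr i) + (Im z)\<^sup>2 > 0" using ext_P[OF dz] rng[OF i] by blast
        have pw: "(Re w - pr 1) * (Re w - pr i) + (Im w)\<^sup>2 > 0" using ext_P[OF dw] rng[OF i] by blast
        show "0 < ((Re z - pr 1) * (Re z - pr i) + (Im z)\<^sup>2) * ((Re w - pr 1) * (Re w - pr i) + (Im w)\<^sup>2)"
          using pz pw by simp
        show "0 \<le> -1 * (pr 1 - pr i) * ((Re z - pr 1) * (Re z - pr i) + (Im z)\<^sup>2)"
          using pz rng[OF i] by simp
        show "0 \<le> -1 * (pr 1 - pr i) * ((Re w - pr 1) * (Re w - pr i) + (Im w)\<^sup>2)"
          using pw rng[OF i] by simp
      qed
    qed
  qed
qed

end
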